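(* For every bipartite state $\rho$ on $\mathcal{H}^A\otimes\mathcal{H}^B$ ($\dim\mathcal{H}^A=m$, $\dim\mathcal{H}^B=n$), $D_P(\rho)\le D_G(\rho)$, where $D_P(\rho)=\min_P\|\mathcal{T}-P\mathcal{T}\|^2$ (minimum over rank-$(m-1)$ orthogonal projections $P$ on $\mathbb{R}^{m^2-1}$, Frobenius norm) and $D_G(\rho)=\min_{\chi}\mathrm{Tr}(\rho-\chi)^2$ with the minimum over all zero-discord states $\chi$.
   Context: Generators $\hat\lambda_i^A$ ($i=1,\dots,m^2-1$) of $SU(m)$ and $\hat\lambda_j^B$ of $SU(n)$ are Hermitian, traceless, with $\mathrm{Tr}(\hat\lambda_i\hat\lambda_j)=2\delta_{ij}$. For a state $\rho$, $x_i=\frac{m}{2}\mathrm{Tr}[(\hat\lambda_i^A\otimes\mathbb{I})\rho]$, $t_{ij}=\frac{mn}{4}\mathrm{Tr}[(\hat\lambda_i^A\otimes\hat\lambda_j^B)\rho]$, $T=(t_{ij})$, and the left-correlation matrix is $\mathcal{T}=\sqrt{\frac{2}{m^2n}}\begin{pmatrix}\vec{x} & \sqrt{\frac{2}{n}}T\end{pmatrix}$. A state $\chi$ is zero-discord (classical-quantum) if $\chi=\sum_{k=1}^m p_k|k\rangle\langle k|\otimes\rho_k^B$ for some orthonormal basis $\{|k\rangle\}$ of $\mathcal{H}^A$, probabilities $p_k$ and states $\rho_k^B$ on $\mathcal{H}^B$. *)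

theory Defs
  imports "Jordan_Normal_Form.Matrix" "Jordan_Normal_Form.DL_Rank"
begin

definition mtrace :: "'a::comm_ring_1 mat \<Rightarrow> 'a" where
  "mtrace A = (\<Sum>i<dim_row A. A $$ (i,i))"

(* Kronecker (tensor) product; basis |a> (x) |b> has index a * dim B + b *)
definition kron :: "complex mat \<Rightarrow> complex mat \<Rightarrow> complex mat" where
  "kron A B = mat (dim_row A * dim_row B) (dim_col A * dim_col B)
     (\<lambda>(i,j). A $$ (i div dim_row B, j div dim_col B) * B $$ (i mod dim_row B, j mod dim_col B))"

definition outer :: "complex vec \<Rightarrow> complex vec \<Rightarrow> complex mat" where
  "outer v w = mat (dim_vec v) (dim_vec w) (\<lambda>(i,j). v $ i * cnj (w $ j))"

definition hermitian_mat :: "nat \<Rightarrow> complex mat \<Rightarrow> bool" where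
  "hermitian_mat d A \<longleftrightarrow> A \<in> carrier_mat d d \<and>
     (\<forall>i<d. \<forall>j<d. A $$ (i,j) = cnj (A $$ (j,i)))"

definition psd_mat :: "nat \<Rightarrow> complex mat \<Rightarrow> bool" where
  "psd_mat d A \<longleftrightarrow> A \<in> carrier_mat d d \<and>
     (\<forall>v\<in>carrier_vec d. let q = (\<Sum>i<d. cnj (v $ i) * (A *\<^sub>v v) $ i) in Im q = 0 \<and> Re q \<ge> 0)"

definition is_state :: "nat \<Rightarrow> complex mat \<Rightarrow> bool" where
  "is_state d \<rho> \<longleftrightarrow> hermitian_mat d \<rho> \<and> psd_mat d \<rho> \<and> mtrace \<rho> = 1"

definition su_generators :: "nat \<Rightarrow> (nat \<Rightarrow> complex mat) \<Rightarrow> bool" where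
  "su_generators d lam \<longleftrightarrow>
     (\<forall>i<d^2-1. hermitian_mat d (lam i) \<and> mtrace (lam i) = 0) \<and>
     (\<forall>i<d^2-1. \<forall>j<d^2-1. mtrace (lam i * lam j) = (if i = j then 2 else 0))"

definition orthonormal_basis :: "nat \<Rightarrow> (nat \<Rightarrow> complex vec) \<Rightarrow> bool" where
  "orthonormal_basis d e \<longleftrightarrow> (\<forall>k<d. e k \<in> carrier_vec d) \<and>
     (\<forall>k<d. \<forall>l<d. (\<Sum>i<d. cnj (e k $ i) * e l $ i) = (if k = l then 1 else 0))"

definition zero_discord :: "nat \<Rightarrow> nat \<Rightarrow> complex mat \<Rightarrow> bool" where
  "zero_discord m n \<chi> \<longleftrightarrow> (\<exists>e p \<rho>k. orthonormal_basis m e \<and>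
     (\<forall>k<m. p k \<ge> (0::real)) \<and> (\<Sum>k<m. p k) = 1 \<and> (\<forall>k<m. is_state n (\<rho>k k)) \<and>
     \<chi> = mat (m*n) (m*n) (\<lambda>(i,j). \<Sum>k<m. complex_of_real (p k) *
                                   kron (outer (e k) (e k)) (\<rho>k k) $$ (i,j)))"

definition bloch_x :: "nat \<Rightarrow> nat \<Rightarrow> (nat \<Rightarrow> complex mat) \<Rightarrow> complex mat \<Rightarrow> nat \<Rightarrow> real" where
  "bloch_x m n lamA \<rho> i = real m / 2 * Re (mtrace (kron (lamA i) (1\<^sub>m n) * \<rho>))"

definition corr_t :: "nat \<Rightarrow> nat \<Rightarrow> (nat \<Rightarrow> complex mat) \<Rightarrow> (nat \<Rightarrow> complex mat)
                     \<Rightarrow> complex mat \<Rightarrow> nat \<Rightarrow> nat \<Rightarrow> real" where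
  "corr_t m n lamA lamB \<rho> i j = real (m*n) / 4 * Re (mtrace (kron (lamA i) (lamB j) * \<rho>))"

definition left_corr :: "nat \<Rightarrow> nat \<Rightarrow> (nat \<Rightarrow> complex mat) \<Rightarrow> (nat \<Rightarrow> complex mat)
                         \<Rightarrow> complex mat \<Rightarrow> real mat" where
  "left_corr m n lamA lamB \<rho> = mat (m^2-1) (1 + (n^2-1)) (\<lambda>(i,j).
     sqrt (2 / (real m ^ 2 * real n)) *
       (if j = 0 then bloch_x m n lamA \<rho> i
        else sqrt (2 / real n) * corr_t m n lamA lamB \<rho> i (j - 1)))"

definition frob_sq :: "real mat \<Rightarrow> real" where
  "frob_sq A = (\<Sum>i<dim_row A. \<Sum>j<dim_col A. (A $$ (i,j))^2)"

definition orth_proj_rank :: "nat \<Rightarrow> nat \<Rightarrow> real mat \<Rightarrow> bool" where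
  "orth_proj_rank d r P \<longleftrightarrow> P \<in> carrier_mat d d \<and> P\<^sup>T = P \<and> P * P = P \<and>
     vec_space.rank d P = r"

definition D_P :: "nat \<Rightarrow> nat \<Rightarrow> (nat \<Rightarrow> complex mat) \<Rightarrow> (nat \<Rightarrow> complex mat)
                   \<Rightarrow> complex mat \<Rightarrow> real" where
  "D_P m n lamA lamB \<rho> = Inf {frob_sq (left_corr m n lamA lamB \<rho> - P * left_corr m n lamA lamB \<rho>)
                             | P. orth_proj_rank (m^2-1) (m-1) P}"

definition D_G :: "nat \<Rightarrow> nat \<Rightarrow> complex mat \<Rightarrow> real" where
  "D_G m n \<rho> = Inf {Re (mtrace ((\<rho> - \<chi>) * (\<rho> - \<chi>))) | \<chi>. zero_discord m n \<chi>}"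

end

theory Submission
  imports Defs
begin

definition tr2 :: "nat \<Rightarrow> complex mat \<Rightarrow> complex mat \<Rightarrow> complex" where
  "tr2 d A B = (\<Sum>i<d. \<Sum>j<d. A $$ (i,j) * B $$ (j,i))"

lemma sum_split_mult: "(\<Sum>p<m*n. f p) = (\<Sum>a<m. \<Sum>b<n. f (a*n+b :: nat))"
proof -
  have "(\<Sum>b<n. f (a*n+b)) = sum f {a*n..<a*n+n}" for a
    using sum.shift_bounds_nat_ivl[of f 0 "a*n" n]
    by (simp add: atLeast0LessThan add.commute)
  then show ?thesis by (simp add: sum.nat_group)
qed

lemma mtrace_mult: assumes "A \<in> carrier_mat d d" "B \<in> carrier_mat d d"
  shows "mtrace (A*B) = tr2 d A B"
  using assms unfolding mtrace_def tr2_def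
  by (auto simp: scalar_prod_def intro!: sum.cong)

lemma tr2_comm: "tr2 d A B = tr2 d B A"
  unfolding tr2_def by (subst sum.swap) (simp add: mult.commute)

lemma kron_carrier: "A \<in> carrier_mat m m \<Longrightarrow> B \<in> carrier_mat n n \<Longrightarrow> kron A B \<in> carrier_mat (m*n) (m*n)"
  by (simp add: kron_def)

lemma kron_index: "A \<in> carrier_mat m m \<Longrightarrow> B \<in> carrier_mat n n \<Longrightarrow> p < m*n \<Longrightarrow> q < m*n \<Longrightarrow>
  kron A B $$ (p,q) = A $$ (p div n, q div n) * B $$ (p mod n, q mod n)"
  by (simp add: kron_def)

lemma tr2_kron:
  assumes A: "A \<in> carrier_mat m m" and C: "C \<in> carrier_mat m m"
    and B: "B \<in> carrier_mat n n" and D: "D \<in> carrier_mat n n"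
  shows "tr2 (m*n) (kron A B) (kron C D) = tr2 m A C * tr2 n B D"
proof -
  have "tr2 (m*n) (kron A B) (kron C D) =
     (\<Sum>a<m. \<Sum>b<n. \<Sum>c<m. \<Sum>d<n. (A$$(a,c) * C$$(c,a)) * (B$$(b,d) * D$$(d,b)))"
  proof -
    have e: "\<And>a b. b < n \<Longrightarrow> (a*n+b) div n = a \<and> (a*n+b) mod n = b" by auto
    have lt: "a*n+b < m*n" if "a < m" "b < n" for a b
    proof -
      have "a*n + b < Suc a * n" using \<open>b<n\<close> by simp
      also have "\<dots> \<le> m*n" using \<open>a<m\<close> by (intro mult_le_mono1) simp
      finally show ?thesis .
    qed
    have pt: "kron A B $$ (a*n+b, c*n+d) * kron C D $$ (c*n+d, a*n+b) = A$$(a,c)*C$$(c,a)*(B$$(b,d)*D$$(d,b))"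
      if "a<m" "b<n" "c<m" "d<n" for a b c d
    proof -
      have "kron A B $$ (a*n+b, c*n+d) = A$$(a,c)*B$$(b,d)"
        using kron_index[OF A B, of "a*n+b" "c*n+d"] lt that e by simp
      moreover have "kron C D $$ (c*n+d, a*n+b) = C$$(c,a)*D$$(d,b)"
        using kron_index[OF C D, of "c*n+d" "a*n+b"] lt that e by simp
      ultimately show ?thesis by (simp only: ac_simps)
    qed
    show ?thesis unfolding tr2_def sum_split_mult
      by (intro sum.cong refl) (simp add: pt)
  qed
  also have "\<dots> = (\<Sum>a<m. \<Sum>c<m. \<Sum>b<n. \<Sum>d<n. (A$$(a,c) * C$$(c,a)) * (B$$(b,d) * D$$(d,b)))"
    by (rule sum.cong[OF refl], rule sum.swap)
  also have "\<dots> = tr2 m A C * tr2 n B D"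
    by (unfold tr2_def sum_distrib_right, unfold sum_distrib_left, rule refl)
  finally show ?thesis .
qed

lemma herm_carrier: "hermitian_mat d A \<Longrightarrow> A \<in> carrier_mat d d"
  unfolding hermitian_mat_def by blast

lemma herm_cnj: "hermitian_mat d A \<Longrightarrow> i < d \<Longrightarrow> j < d \<Longrightarrow> cnj (A $$ (i,j)) = A $$ (j,i)"
  unfolding hermitian_mat_def by metis

lemma herm_intro: "A \<in> carrier_mat d d \<Longrightarrow> (\<And>i j. i < d \<Longrightarrow> j < d \<Longrightarrow> cnj (A $$ (i,j)) = A $$ (j,i))
  \<Longrightarrow> hermitian_mat d A"
  unfolding hermitian_mat_def by (metis complex_cnj_cnj)

lemma tr2_real: assumes "hermitian_mat d A" "hermitian_mat d B" shows "Im (tr2 d A B) = 0"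
proof -
  have "cnj (tr2 d A B) = tr2 d B A"
  proof -
    have h: "cnj (A$$(i,j)) * cnj (B$$(j,i)) = B$$(i,j) * A$$(j,i)" if "i<d" "j<d" for i j
      using herm_cnj[OF assms(1) that] herm_cnj[OF assms(2) that(2,1)] by (simp add: mult.commute)
    show ?thesis unfolding tr2_def cnj_sum
      by (rule sum.cong[OF refl], rule sum.cong[OF refl]) (simp add: h)
  qed
  then have "cnj (tr2 d A B) = tr2 d A B" using tr2_comm by metis
  then show ?thesis by (simp add: complex_eq_iff)
qed

lemma kron_herm: assumes A: "hermitian_mat m A" and B: "hermitian_mat n B" shows "hermitian_mat (m*n) (kron A B)"
proof (rule herm_intro)
  have Ac: "A \<in> carrier_mat m m" and Bc: "B \<in> carrier_mat n n" using A B herm_carrier by auto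
  show "kron A B \<in> carrier_mat (m*n) (m*n)" using kron_carrier[OF Ac Bc] .
  fix i j assume ij: "i < m*n" "j < m*n"
  then have n: "n > 0" by (cases n) auto
  have d: "i div n < m" "j div n < m" using ij by (auto simp: less_mult_imp_div_less)
  have md: "i mod n < n" "j mod n < n" using n by auto
  show "cnj (kron A B $$ (i,j)) = kron A B $$ (j,i)"
    unfolding kron_index[OF Ac Bc ij] kron_index[OF Ac Bc ij(2,1)]
    using herm_cnj[OF A d] herm_cnj[OF B md] by simp
qed


lemma left_right_inv_fun:
  fixes f g :: "nat \<Rightarrow> nat \<Rightarrow> 'a::field"
  assumes h: "\<And>i j. i<n \<Longrightarrow> j<n \<Longrightarrow> (\<Sum>k<n. f i k * g k j) = (if i=j then 1 else 0)"
  and "i < n" "j < n"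
  shows "(\<Sum>k<n. g i k * f k j) = (if i=j then 1 else 0)"
proof -
  let ?A = "mat n n (\<lambda>(i,j). f i j)" and ?B = "mat n n (\<lambda>(i,j). g i j)"
  have AB: "?A * ?B = 1\<^sub>m n"
  proof (rule eq_matI)
    fix i j assume ij: "i < dim_row (1\<^sub>m n :: 'a mat)" "j < dim_col (1\<^sub>m n :: 'a mat)"
    then have "(?A * ?B) $$ (i,j) = (\<Sum>k<n. f i k * g k j)"
      by (simp add: scalar_prod_def atLeast0LessThan)
    also have "\<dots> = 1\<^sub>m n $$ (i,j)" using h ij by simp
    finally show "(?A * ?B) $$ (i,j) = 1\<^sub>m n $$ (i,j)" .
  qed simp_all
  have "?B * ?A = 1\<^sub>m n" by (rule mat_mult_left_right_inverse[OF _ _ AB]) simp_all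
  then have "(?B * ?A) $$ (i,j) = 1\<^sub>m n $$ (i,j)" by simp
  then show ?thesis using assms(2,3) by (simp add: scalar_prod_def atLeast0LessThan)
qed

lemma onb_complete:
  assumes "orthonormal_basis m e" "a < m" "b < m"
  shows "(\<Sum>k<m. e k $ a * cnj (e k $ b)) = (if a = b then 1 else 0)"
proof -
  have "(\<Sum>k<m. cnj (e i $ k) * e k' $ k) = (if i = k' then 1 else 0)" if "i<m" "k'<m" for i k'
    using assms(1) that unfolding orthonormal_basis_def by blast
  from left_right_inv_fun[of m "\<lambda>i k. cnj (e i $ k)" "\<lambda>k j. e j $ k", OF this assms(2,3)]
  show ?thesis by simp
qed


lemma tr2_one_left: "tr2 d (1\<^sub>m d) A = (\<Sum>i<d. A $$ (i,i))"
  unfolding tr2_def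
proof (rule sum.cong[OF refl])
  fix i assume "i \<in> {..<d}"
  then have "(\<Sum>j<d. 1\<^sub>m d $$ (i,j) * A$$(j,i)) = (\<Sum>j<d. if i = j then A$$(i,i) else 0)"
    by (intro sum.cong refl) auto
  then show "(\<Sum>j<d. 1\<^sub>m d $$ (i,j) * A$$(j,i)) = A$$(i,i)" using \<open>i \<in> {..<d}\<close> by simp
qed

lemma tr2_one_one: "tr2 d (1\<^sub>m d) (1\<^sub>m d) = of_nat d"
  unfolding tr2_one_left by simp

lemma gen_complete:
  assumes su: "su_generators m lam" and m: "m \<ge> 1" and abcd: "a<m" "b<m" "c<m" "d<m"
  shows "(\<Sum>s<m^2-1. lam s $$ (b,a) * lam s $$ (c,d)) =
     (if a = c \<and> b = d then 2 else 0) - (if a = b \<and> c = d then 2 / of_nat m else 0)"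
proof -
  define B where "B \<alpha> = (if \<alpha> = 0 then 1\<^sub>m m else lam (\<alpha> - 1))" for \<alpha>
  define cc :: "nat \<Rightarrow> complex" where "cc \<alpha> = (if \<alpha> = 0 then of_nat m else 2)" for \<alpha>
  have lamh: "hermitian_mat m (lam s)" if "s < m^2-1" for s using su that unfolding su_generators_def by blast
  have lamtr: "mtrace (lam s) = 0" if "s < m^2-1" for s using su that unfolding su_generators_def by blast
  have lamo: "mtrace (lam s * lam t) = (if s = t then 2 else 0)" if "s < m^2-1" "t < m^2-1" for s t
    using su that unfolding su_generators_def by blast
  have Bh: "hermitian_mat m (B \<alpha>)" if "\<alpha> < m^2" for \<alpha>
  proof (cases "\<alpha> = 0")
    case True
    show ?thesis unfolding B_def True by (rule herm_intro) auto
  next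
    case False then show ?thesis unfolding B_def using lamh that by simp
  qed
  have Bo: "tr2 m (B \<alpha>) (B \<beta>) = (if \<alpha> = \<beta> then cc \<alpha> else 0)" if "\<alpha> < m^2" "\<beta> < m^2" for \<alpha> \<beta>
  proof -
    have tl: "tr2 m (1\<^sub>m m) (lam s) = 0" if "s < m^2 - 1" for s
    proof -
      have "tr2 m (1\<^sub>m m) (lam s) = mtrace (lam s)"
        unfolding tr2_one_left mtrace_def using herm_carrier[OF lamh[OF that]] by simp
      then show ?thesis using lamtr[OF that] by simp
    qed
    show ?thesis
    proof (cases "\<alpha> = 0"; cases "\<beta> = 0")
      assume "\<alpha> = 0" "\<beta> = 0" then show ?thesis unfolding B_def cc_def by (simp add: tr2_one_one)
    next
      assume "\<alpha> = 0" "\<beta> \<noteq> 0" then show ?thesis unfolding B_def cc_def using tl that by simp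
    next
      assume "\<alpha> \<noteq> 0" "\<beta> = 0" then show ?thesis unfolding B_def cc_def using tl that tr2_comm by simp
    next
      assume a: "\<alpha> \<noteq> 0" "\<beta> \<noteq> 0"
      have "tr2 m (lam (\<alpha>-1)) (lam (\<beta>-1)) = mtrace (lam (\<alpha>-1) * lam (\<beta>-1))"
        using that a by (intro mtrace_mult[symmetric] herm_carrier lamh) auto
      also have "\<dots> = (if \<alpha> = \<beta> then 2 else 0)" using lamo[of "\<alpha>-1" "\<beta>-1"] that a by auto
      finally show ?thesis unfolding B_def cc_def using a by simp
    qed
  qed
  have ccnz: "cc \<alpha> \<noteq> 0" for \<alpha> using m unfolding cc_def by auto
  define f where "f \<alpha> p = B \<alpha> $$ (p div m, p mod m) / cc \<alpha>" for \<alpha> p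
  define g where "g p \<beta> = cnj (B \<beta> $$ (p div m, p mod m))" for p \<beta>
  have dm: "(x*m+y) div m = x" "(x*m+y) mod m = y" if "y < m" for x y using that by auto
  have fg: "(\<Sum>p<m^2. f \<alpha> p * g p \<beta>) = (if \<alpha> = \<beta> then 1 else 0)" if "\<alpha> < m^2" "\<beta> < m^2" for \<alpha> \<beta>
  proof -
    have "(\<Sum>p<m^2. f \<alpha> p * g p \<beta>) = (\<Sum>x<m. \<Sum>y<m. B \<alpha> $$ (x,y) * B \<beta> $$ (y,x)) / cc \<alpha>"
      unfolding power2_eq_square sum_split_mult sum_divide_distrib f_def g_def
      using herm_cnj[OF Bh[OF that(2)]] by (intro sum.cong refl) (simp add: dm)
    also have "\<dots> = (if \<alpha> = \<beta> then 1 else 0)" using Bo[OF that] ccnz unfolding tr2_def by simp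
    finally show ?thesis .
  qed
  have p: "a*m+b < m^2" "c*m+d < m^2"
  proof -
    have "a*m+b < Suc a * m" "c*m+d < Suc c*m" using abcd by auto
    moreover have "Suc a * m \<le> m*m" "Suc c * m \<le> m*m" using abcd by (metis Suc_leI mult_le_mono1)+
    ultimately show "a*m+b < m^2" "c*m+d < m^2" unfolding power2_eq_square by linarith+
  qed
  from left_right_inv_fun[of "m^2" f g, OF fg p]
  have "(\<Sum>\<alpha><m^2. g (a*m+b) \<alpha> * f \<alpha> (c*m+d)) = (if a*m+b = c*m+d then 1 else 0)" by blast
  also have "(a*m+b = c*m+d) = (a = c \<and> b = d)"
    using dm[OF abcd(2), of a] dm[OF abcd(4), of c] by metis
  finally have E: "(\<Sum>\<alpha><m^2. g (a*m+b) \<alpha> * f \<alpha> (c*m+d)) = (if a = c \<and> b = d then 1 else 0)" .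
  have m2: "m^2 = Suc (m^2-1)" using m by (simp add: power2_eq_square)
  have "(\<Sum>\<alpha><m^2. g (a*m+b) \<alpha> * f \<alpha> (c*m+d)) =
     cnj (1\<^sub>m m $$ (a,b)) * 1\<^sub>m m $$ (c,d) / of_nat m +
       (\<Sum>s<m^2-1. lam s $$ (b,a) * lam s $$ (c,d)) / 2"
    apply (subst m2, subst sum.lessThan_Suc_shift)
    unfolding f_def g_def B_def cc_def dm[OF abcd(2)] dm[OF abcd(4)] sum_divide_distrib
    using herm_cnj[OF lamh abcd(1,2)] by simp
  also have "cnj (1\<^sub>m m $$ (a,b)) * 1\<^sub>m m $$ (c,d) / of_nat m = (if a = b \<and> c = d then 1 / of_nat m else 0)"
    using abcd by simp
  finally have "(if a = b \<and> c = d then 1 / of_nat m else 0) + (\<Sum>s<m^2-1. lam s $$ (b,a) * lam s $$ (c,d)) / 2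
     = (if a = c \<and> b = d then 1 else 0)" using E by simp
  then show ?thesis by (auto simp: field_simps split: if_splits)
qed


lemma sum_delta2: assumes "a<m" "b<(m::nat)"
  shows "(\<Sum>c<m. \<Sum>d<m. F c d * (if a = c \<and> b = d then z else 0)) = F a b * (z::complex)"
proof -
  have "(\<Sum>c<m. \<Sum>d<m. F c d * (if a = c \<and> b = d then z else 0)) = (\<Sum>c<m. if a = c then F a b * z else 0)"
  proof (rule sum.cong[OF refl])
    fix c assume "c \<in> {..<m}"
    show "(\<Sum>d<m. F c d * (if a = c \<and> b = d then z else 0)) = (if a = c then F a b * z else 0)"
      using assms by (cases "c = a") (auto simp: if_distrib cong: if_cong)
  qed
  then show ?thesis using assms by simp
qed

lemma sum_delta2': assumes "a<m" "b<(m::nat)"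
  shows "(\<Sum>c<m. \<Sum>d<m. F c d * (if a = b \<and> c = d then z else 0)) = (if a = b then (\<Sum>c<m. F c c) * (z::complex) else 0)"
proof (cases "a = b")
  case True
  have "(\<Sum>c<m. \<Sum>d<m. F c d * (if a = b \<and> c = d then z else 0)) = (\<Sum>c<m. F c c * z)"
  proof (rule sum.cong[OF refl])
    fix c assume "c \<in> {..<m}"
    then show "(\<Sum>d<m. F c d * (if a = b \<and> c = d then z else 0)) = F c c * z"
      using True by (auto simp: if_distrib cong: if_cong)
  qed
  then show ?thesis using True by (simp add: sum_distrib_right)
qed simp

lemma outer_index: "i < dim_vec v \<Longrightarrow> j < dim_vec w \<Longrightarrow> outer v w $$ (i,j) = v$i * cnj (w$j)"
  by (simp add: outer_def)

lemma outer_carrier: "v \<in> carrier_vec m \<Longrightarrow> outer v v \<in> carrier_mat m m"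
  by (simp add: outer_def)

lemma outer_herm: "v \<in> carrier_vec m \<Longrightarrow> hermitian_mat m (outer v v)"
  by (rule herm_intro) (auto simp: outer_def)

lemma onb_orth: "orthonormal_basis m e \<Longrightarrow> k < m \<Longrightarrow> l < m \<Longrightarrow>
   (\<Sum>i<m. cnj (e k $ i) * e l $ i) = (if k = l then 1 else 0)"
  unfolding orthonormal_basis_def by blast

lemma onb_carrier: "orthonormal_basis m e \<Longrightarrow> k < m \<Longrightarrow> e k \<in> carrier_vec m"
  unfolding orthonormal_basis_def by blast

lemma bloch_gram:
  assumes su: "su_generators m lam" and m: "m \<ge> 1" and onb: "orthonormal_basis m e"
    and kl: "k < m" "l < m"
  shows "(\<Sum>s<m^2-1. tr2 m (lam s) (outer (e k) (e k)) * tr2 m (lam s) (outer (e l) (e l)))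
     = (if k = l then 2 else 0) - 2 / of_nat m"
proof -
  define E where "E k = outer (e k) (e k)" for k
  define L where "L s a b = lam s $$ (a,b)" for s a b
  define N where "N = m^2 - 1"
  have Ei: "E k' $$ (a,b) = e k' $ a * cnj (e k' $ b)" if "k' < m" "a < m" "b < m" for k' a b
    unfolding E_def using onb_carrier[OF onb that(1)] that by (simp add: outer_index)
  have t1: "tr2 m (lam s) (E k) = (\<Sum>a<m. \<Sum>b<m. E k $$ (a,b) * L s b a)" for s
    unfolding L_def by (subst tr2_comm) (simp add: tr2_def)
  have t2: "tr2 m (lam s) (E l) = (\<Sum>c<m. \<Sum>d<m. L s c d * E l $$ (d,c))" for s
    unfolding L_def by (simp add: tr2_def)
  have "(\<Sum>s<N. tr2 m (lam s) (E k) * tr2 m (lam s) (E l))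
     = (\<Sum>s<N. \<Sum>a<m. \<Sum>b<m. \<Sum>c<m. \<Sum>d<m. (E k $$ (a,b) * E l $$ (d,c)) * (L s b a * L s c d))"
    by (unfold t1 t2 sum_distrib_right, unfold sum_distrib_left, simp add: ac_simps)
  also have "\<dots> = (\<Sum>a<m. \<Sum>b<m. \<Sum>c<m. \<Sum>d<m. \<Sum>s<N. (E k $$ (a,b) * E l $$ (d,c)) * (L s b a * L s c d))"
    apply (subst sum.swap, rule sum.cong[OF refl])
    apply (subst sum.swap, rule sum.cong[OF refl])
    apply (subst sum.swap, rule sum.cong[OF refl])
    apply (subst sum.swap, rule refl)
    done
  also have "\<dots> = (\<Sum>a<m. \<Sum>b<m. \<Sum>c<m. \<Sum>d<m. (E k $$ (a,b) * E l $$ (d,c)) *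
       ((if a = c \<and> b = d then 2 else 0) - (if a = b \<and> c = d then 2 / of_nat m else 0)))"
    unfolding sum_distrib_left[symmetric] L_def N_def
    by (intro sum.cong refl) (subst gen_complete[OF su m], simp_all)
  also have "\<dots> = (\<Sum>a<m. \<Sum>b<m. E k $$ (a,b) * E l $$ (b,a) * 2 -
        (if a = b then (\<Sum>c<m. E k $$ (a,b) * E l $$ (c,c)) * (2 / of_nat m) else 0))"
  proof (intro sum.cong refl)
    fix a b assume ab: "a \<in> {..<m}" "b \<in> {..<m}"
    have "(\<Sum>c<m. \<Sum>d<m. (E k $$ (a,b) * E l $$ (d,c)) *
       ((if a = c \<and> b = d then 2 else 0) - (if a = b \<and> c = d then 2 / of_nat m else 0)))
      = (\<Sum>c<m. \<Sum>d<m. (E k $$ (a,b) * E l $$ (d,c)) * (if a = c \<and> b = d then 2 else 0))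
        - (\<Sum>c<m. \<Sum>d<m. (E k $$ (a,b) * E l $$ (d,c)) * (if a = b \<and> c = d then 2 / of_nat m else 0))"
      by (simp add: right_diff_distrib sum_subtractf)
    also have "\<dots> = E k $$ (a,b) * E l $$ (b,a) * 2 -
        (if a = b then (\<Sum>c<m. E k $$ (a,b) * E l $$ (c,c)) * (2 / of_nat m) else 0)"
      using ab by (simp add: sum_delta2 sum_delta2')
    finally show "(\<Sum>c<m. \<Sum>d<m. (E k $$ (a,b) * E l $$ (d,c)) *
       ((if a = c \<and> b = d then 2 else 0) - (if a = b \<and> c = d then 2 / of_nat m else 0))) =
       E k $$ (a,b) * E l $$ (b,a) * 2 -
        (if a = b then (\<Sum>c<m. E k $$ (a,b) * E l $$ (c,c)) * (2 / of_nat m) else 0)" .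
  qed
  also have "\<dots> = 2 * (\<Sum>a<m. \<Sum>b<m. E k $$ (a,b) * E l $$ (b,a)) -
       (\<Sum>a<m. E k $$ (a,a)) * (\<Sum>c<m. E l $$ (c,c)) * (2 / of_nat m)"
    by (simp add: sum_subtractf sum_distrib_left sum_distrib_right ac_simps, rule sum.swap)
  also have "(\<Sum>a<m. \<Sum>b<m. E k $$ (a,b) * E l $$ (b,a)) = (if k = l then 1 else 0)"
  proof -
    have "(\<Sum>a<m. \<Sum>b<m. E k $$ (a,b) * E l $$ (b,a)) =
       (\<Sum>a<m. \<Sum>b<m. (cnj (cnj (e k $ a) * e l $ a)) * (cnj (e k $ b) * e l $ b))"
      using kl by (intro sum.cong refl) (simp add: Ei ac_simps)
    also have "\<dots> = cnj (\<Sum>a<m. cnj (e k $ a) * e l $ a) * (\<Sum>b<m. cnj (e k $ b) * e l $ b)"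
      unfolding cnj_sum sum_product by simp
    also have "\<dots> = (if k = l then 1 else 0)" using onb_orth[OF onb kl] by simp
    finally show ?thesis .
  qed
  finally have main: "(\<Sum>s<N. tr2 m (lam s) (E k) * tr2 m (lam s) (E l)) = 2 * (if k = l then 1 else 0) -
    (\<Sum>a<m. E k $$ (a, a)) * (\<Sum>c<m. E l $$ (c, c)) * (2 / complex_of_nat m)" .
  have tr: "(\<Sum>a<m. E k $$ (a,a)) = 1" "(\<Sum>a<m. E l $$ (a,a)) = 1"
  proof -
    have "(\<Sum>a<m. E k' $$ (a,a)) = 1" if "k' < m" for k'
    proof -
      have "(\<Sum>a<m. E k' $$ (a,a)) = cnj (\<Sum>a<m. cnj (e k' $ a) * e k' $ a)"
        using that by (simp add: Ei cnj_sum mult.commute)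
      then show ?thesis using onb_orth[OF onb that that] by simp
    qed
    then show "(\<Sum>a<m. E k $$ (a,a)) = 1" "(\<Sum>a<m. E l $$ (a,a)) = 1" using kl by auto
  qed
  show ?thesis using main unfolding tr unfolding E_def N_def by simp
qed

lemma bloch_sum0:
  assumes su: "su_generators m lam" and onb: "orthonormal_basis m e" and s: "s < m^2-1"
  shows "(\<Sum>k<m. tr2 m (lam s) (outer (e k) (e k))) = 0"
proof -
  have Ei: "outer (e k) (e k) $$ (a,b) = e k $ a * cnj (e k $ b)" if "k < m" "a < m" "b < m" for k a b
    using onb_carrier[OF onb that(1)] that by (simp add: outer_index)
  have "(\<Sum>k<m. tr2 m (lam s) (outer (e k) (e k))) = (\<Sum>k<m. \<Sum>a<m. \<Sum>b<m. lam s $$ (a,b) * (e k $ b * cnj (e k $ a)))"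
    unfolding tr2_def by (intro sum.cong refl) (simp add: Ei)
  also have "\<dots> = (\<Sum>a<m. \<Sum>b<m. lam s $$ (a,b) * (\<Sum>k<m. e k $ b * cnj (e k $ a)))"
    unfolding sum_distrib_left by (subst sum.swap, rule sum.cong[OF refl], rule sum.swap)
  also have "\<dots> = (\<Sum>a<m. \<Sum>b<m. lam s $$ (a,b) * (if b = a then 1 else 0))"
    by (intro sum.cong refl) (simp add: onb_complete[OF onb])
  also have "\<dots> = (\<Sum>a<m. lam s $$ (a,a))"
    by (intro sum.cong refl) (simp add: if_distrib cong: if_cong)
  also have "\<dots> = mtrace (lam s)"
    using su s unfolding su_generators_def mtrace_def hermitian_mat_def by (metis (no_types, lifting) carrier_matD(1))
  also have "\<dots> = 0" using su s unfolding su_generators_def by blast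
  finally show ?thesis .
qed


lemma cmod_sq_cnj: "z * cnj z = complex_of_real ((cmod z)^2)"
  by (simp add: complex_mult_cnj cmod_power2)

lemma bessel:
  fixes f :: "'e \<Rightarrow> complex" and g :: "'b \<Rightarrow> 'e \<Rightarrow> complex" and c :: "'b \<Rightarrow> real"
  assumes fin: "finite E" "finite I" and cpos: "\<And>\<alpha>. \<alpha>\<in>I \<Longrightarrow> c \<alpha> > 0"
  and orth: "\<And>\<alpha> \<beta>. \<alpha>\<in>I \<Longrightarrow> \<beta>\<in>I \<Longrightarrow> (\<Sum>e\<in>E. g \<alpha> e * cnj (g \<beta> e)) = (if \<alpha> = \<beta> then of_real (c \<alpha>) else 0)"
  shows "(\<Sum>\<alpha>\<in>I. (cmod (\<Sum>e\<in>E. f e * cnj (g \<alpha> e)))^2 / c \<alpha>) \<le> (\<Sum>e\<in>E. (cmod (f e))^2)"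
proof -
  define F where "F \<alpha> = (\<Sum>e\<in>E. f e * cnj (g \<alpha> e))" for \<alpha>
  define w where "w \<alpha> = F \<alpha> / of_real (c \<alpha>)" for \<alpha>
  define s where "s e = (\<Sum>\<alpha>\<in>I. w \<alpha> * g \<alpha> e)" for e
  have cnz: "complex_of_real (c \<alpha>) \<noteq> 0" if "\<alpha> \<in> I" for \<alpha> using cpos[OF that] by simp
  have A1: "(\<Sum>e\<in>E. f e * cnj (s e)) = (\<Sum>\<alpha>\<in>I. F \<alpha> * cnj (F \<alpha>) / of_real (c \<alpha>))"
  proof -
    have "(\<Sum>e\<in>E. f e * cnj (s e)) = (\<Sum>e\<in>E. \<Sum>\<alpha>\<in>I. cnj (w \<alpha>) * (f e * cnj (g \<alpha> e)))"
      unfolding s_def cnj_sum sum_distrib_left by (simp add: ac_simps)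
    also have "\<dots> = (\<Sum>\<alpha>\<in>I. cnj (w \<alpha>) * F \<alpha>)"
      unfolding F_def sum_distrib_left by (rule sum.swap)
    also have "\<dots> = (\<Sum>\<alpha>\<in>I. F \<alpha> * cnj (F \<alpha>) / of_real (c \<alpha>))"
      unfolding w_def by (simp add: ac_simps)
    finally show ?thesis .
  qed
  have A2: "(\<Sum>e\<in>E. s e * cnj (f e)) = (\<Sum>\<alpha>\<in>I. F \<alpha> * cnj (F \<alpha>) / of_real (c \<alpha>))"
  proof -
    have "(\<Sum>e\<in>E. s e * cnj (f e)) = cnj (\<Sum>e\<in>E. f e * cnj (s e))"
      by (simp add: cnj_sum mult.commute)
    also have "\<dots> = (\<Sum>\<alpha>\<in>I. F \<alpha> * cnj (F \<alpha>) / of_real (c \<alpha>))"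
      unfolding A1 cnj_sum by (simp add: mult.commute)
    finally show ?thesis .
  qed
  have A3: "(\<Sum>e\<in>E. s e * cnj (s e)) = (\<Sum>\<alpha>\<in>I. F \<alpha> * cnj (F \<alpha>) / of_real (c \<alpha>))"
  proof -
    have "(\<Sum>e\<in>E. s e * cnj (s e)) = (\<Sum>e\<in>E. \<Sum>\<alpha>\<in>I. \<Sum>\<beta>\<in>I. w \<alpha> * cnj (w \<beta>) * (g \<alpha> e * cnj (g \<beta> e)))"
      unfolding s_def cnj_sum by (unfold sum_distrib_right, unfold sum_distrib_left, simp add: ac_simps)
    also have "\<dots> = (\<Sum>\<alpha>\<in>I. \<Sum>\<beta>\<in>I. w \<alpha> * cnj (w \<beta>) * (\<Sum>e\<in>E. g \<alpha> e * cnj (g \<beta> e)))"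
      unfolding sum_distrib_left
      by (subst sum.swap, rule sum.cong[OF refl], rule sum.swap)
    also have "\<dots> = (\<Sum>\<alpha>\<in>I. \<Sum>\<beta>\<in>I. if \<alpha> = \<beta> then w \<alpha> * cnj (w \<alpha>) * of_real (c \<alpha>) else 0)"
      by (intro sum.cong refl) (simp add: orth)
    also have "\<dots> = (\<Sum>\<alpha>\<in>I. w \<alpha> * cnj (w \<alpha>) * of_real (c \<alpha>))"
      using fin by simp
    also have "\<dots> = (\<Sum>\<alpha>\<in>I. F \<alpha> * cnj (F \<alpha>) / of_real (c \<alpha>))"
      unfolding w_def using cnz by (intro sum.cong refl) (simp add: field_simps)
    finally show ?thesis .
  qed
  have "(\<Sum>e\<in>E. (f e - s e) * cnj (f e - s e)) =
     (\<Sum>e\<in>E. f e * cnj (f e)) - (\<Sum>e\<in>E. f e * cnj (s e)) - (\<Sum>e\<in>E. s e * cnj (f e)) + (\<Sum>e\<in>E. s e * cnj (s e))"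
  proof -
    have "(f e - s e) * cnj (f e - s e) = f e * cnj (f e) - f e * cnj (s e) - s e * cnj (f e) + s e * cnj (s e)" for e
      by (simp add: complex_cnj_diff ring_distribs)
    then show ?thesis by (simp only: sum.distrib sum_subtractf)
  qed
  also have "\<dots> = (\<Sum>e\<in>E. f e * cnj (f e)) - (\<Sum>\<alpha>\<in>I. F \<alpha> * cnj (F \<alpha>) / of_real (c \<alpha>))"
    unfolding A1 A2 A3 by simp
  finally have eq: "(\<Sum>e\<in>E. (f e - s e) * cnj (f e - s e)) =
    complex_of_real ((\<Sum>e\<in>E. (cmod (f e))^2) - (\<Sum>\<alpha>\<in>I. (cmod (F \<alpha>))^2 / c \<alpha>))"
    unfolding cmod_sq_cnj by simp
  have eq2: "(\<Sum>e\<in>E. (f e - s e) * cnj (f e - s e)) = complex_of_real (\<Sum>e\<in>E. (cmod (f e - s e))^2)"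
    unfolding cmod_sq_cnj by simp
  have "(\<Sum>e\<in>E. (cmod (f e - s e))^2) = (\<Sum>e\<in>E. (cmod (f e))^2) - (\<Sum>\<alpha>\<in>I. (cmod (F \<alpha>))^2 / c \<alpha>)"
    using trans[OF eq2[symmetric] eq] of_real_eq_iff by blast
  moreover have "(\<Sum>e\<in>E. (cmod (f e - s e))^2) \<ge> 0" by (simp add: sum_nonneg)
  ultimately show ?thesis unfolding F_def by linarith
qed


lemma proj_contract:
  fixes P :: "nat \<Rightarrow> nat \<Rightarrow> real" and v :: "nat \<Rightarrow> real"
  assumes sym: "\<And>r s. r<N \<Longrightarrow> s<N \<Longrightarrow> P r s = P s r"
  and idem: "\<And>s t. s<N \<Longrightarrow> t<N \<Longrightarrow> (\<Sum>r<N. P s r * P r t) = P s t"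
  shows "(\<Sum>r<N. (v r - (\<Sum>s<N. P r s * v s))^2) \<le> (\<Sum>r<N. (v r)^2)"
proof -
  define w where "w r = (\<Sum>s<N. P r s * v s)" for r
  have ww: "(\<Sum>r<N. (w r)^2) = (\<Sum>r<N. v r * w r)"
  proof -
    have "(\<Sum>r<N. (w r)^2) = (\<Sum>r<N. \<Sum>s<N. \<Sum>t<N. v s * v t * (P s r * P r t))"
    proof (rule sum.cong[OF refl])
      fix r assume r: "r \<in> {..<N}"
      have "(w r)^2 = (\<Sum>s<N. \<Sum>t<N. (P r s * v s) * (P r t * v t))"
        unfolding w_def power2_eq_square sum_product ..
      also have "\<dots> = (\<Sum>s<N. \<Sum>t<N. v s * v t * (P s r * P r t))"
        using r sym by (intro sum.cong refl) (simp add: ac_simps)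
      finally show "(w r)^2 = (\<Sum>s<N. \<Sum>t<N. v s * v t * (P s r * P r t))" .
    qed
    also have "\<dots> = (\<Sum>s<N. \<Sum>t<N. \<Sum>r<N. v s * v t * (P s r * P r t))"
      by (subst sum.swap, rule sum.cong[OF refl], rule sum.swap)
    also have "\<dots> = (\<Sum>s<N. \<Sum>t<N. v s * v t * P s t)"
      by (intro sum.cong refl) (simp add: idem flip: sum_distrib_left)
    also have "\<dots> = (\<Sum>r<N. v r * w r)"
      unfolding w_def sum_distrib_left by (simp add: ac_simps)
    finally show ?thesis .
  qed
  have "(\<Sum>r<N. (v r - w r)^2) = (\<Sum>r<N. (v r)^2) - 2 * (\<Sum>r<N. v r * w r) + (\<Sum>r<N. (w r)^2)"
    by (simp add: power2_diff sum.distrib sum_subtractf sum_distrib_left mult.assoc)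
  also have "\<dots> = (\<Sum>r<N. (v r)^2) - (\<Sum>r<N. (w r)^2)" using ww by simp
  also have "\<dots> \<le> (\<Sum>r<N. (v r)^2)" by (simp add: sum_nonneg)
  finally show ?thesis unfolding w_def .
qed


lemma gram_indep_coeffs:
  fixes a :: "nat \<Rightarrow> nat \<Rightarrow> real" and c :: "nat \<Rightarrow> real"
  assumes gram: "\<And>k l. k<m \<Longrightarrow> l<m \<Longrightarrow> (\<Sum>r<N. a k r * a l r) = (if k=l then 2 else 0) - 2 / real m"
    and L: "L \<subseteq> {..<m-1}" and zero: "\<And>r. r<N \<Longrightarrow> (\<Sum>l\<in>L. c l * a l r) = 0" and m: "m \<ge> 2"
  shows "\<forall>l\<in>L. c l = 0"
proof -
  define S where "S = (\<Sum>l\<in>L. c l)"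
  have finL: "finite L" using L finite_subset by blast
  have cj: "c j = S / real m" if j: "j \<in> L" for j
  proof -
    have jm: "j < m" using j L by auto
    have "0 = (\<Sum>r<N. a j r * (\<Sum>l\<in>L. c l * a l r))" using zero by simp
    also have "\<dots> = (\<Sum>l\<in>L. c l * (\<Sum>r<N. a j r * a l r))"
      unfolding sum_distrib_left by (subst sum.swap) (simp add: ac_simps)
    also have "\<dots> = (\<Sum>l\<in>L. c l * ((if j=l then 2 else 0) - 2 / real m))"
      using L jm by (intro sum.cong refl) (auto simp: gram)
    also have "\<dots> = (\<Sum>l\<in>L. (if j = l then 2 * c l else 0) - c l * (2 / real m))"
      by (intro sum.cong refl) (auto simp: algebra_simps)
    also have "\<dots> = 2 * c j - 2 / real m * S"
      using finL j unfolding sum_subtractf S_def sum_distrib_right[symmetric] by simp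
    finally show ?thesis using m by (simp add: field_simps)
  qed
  have "S = (\<Sum>l\<in>L. c l)" unfolding S_def ..
  also have "\<dots> = (\<Sum>l\<in>L. S / real m)" using cj by (intro sum.cong) auto
  also have "\<dots> = real (card L) * S / real m" by simp
  finally have "S * real m = real (card L) * S" using m by (simp add: field_simps)
  moreover have "card L < m"
  proof -
    have "card L \<le> card {..<m-1}" using L by (intro card_mono) auto
    then show ?thesis using m by simp
  qed
  ultimately have "S = 0"
  proof -
    have "real (card L) \<noteq> real m" using \<open>card L < m\<close> by simp
    with \<open>S * real m = real (card L) * S\<close> show ?thesis by (simp add: algebra_simps)
  qed
  then show ?thesis using cj by simp
qed

lemma rank_sum_le:
  fixes f g :: "nat \<Rightarrow> nat \<Rightarrow> 'a::field"
  shows "vec_space.rank N (mat N N' (\<lambda>(r,s). \<Sum>k<K. f k r * g k s)) \<le> K"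
proof (induction K)
  case 0
  have eq0: "mat N N' (\<lambda>(r,s). \<Sum>k<0. f k r * g k s) = (0\<^sub>m N N' :: 'a mat)" by (rule eq_matI) auto
  show ?case unfolding eq0 by (simp add: vec_space.rank_0I)
next
  case (Suc K)
  have "mat N N' (\<lambda>(r,s). \<Sum>k<Suc K. f k r * g k s) =
     mat N N' (\<lambda>(r,s). \<Sum>k<K. f k r * g k s) + mat N N' (\<lambda>(r,s). f K r * g K s)"
    by (rule eq_matI) auto
  moreover have "vec_space.rank N (mat N N' (\<lambda>(r,s). f K r * g K s)) \<le> 1"
    by (rule vec_space.rank_le_1_product_entries[where f="f K" and g="g K" and nc=N']) auto
  moreover have "vec_space.rank N (mat N N' (\<lambda>(r,s). \<Sum>k<K. f k r * g k s) + mat N N' (\<lambda>(r,s). f K r * g K s))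
     \<le> vec_space.rank N (mat N N' (\<lambda>(r,s). \<Sum>k<K. f k r * g k s)) + vec_space.rank N (mat N N' (\<lambda>(r,s). f K r * g K s))"
    by (rule vec_space.rank_subadditive) auto
  ultimately show ?case using Suc by simp
qed

lemma gram_vecs_indpt:
  fixes a :: "nat \<Rightarrow> nat \<Rightarrow> real"
  assumes gram: "\<And>k l. k<m \<Longrightarrow> l<m \<Longrightarrow> (\<Sum>r<n. a k r * a l r) = (if k=l then 2 else 0) - 2 / real m"
    and m: "m \<ge> 2"
  shows "inj_on (\<lambda>l. vec n (a l)) {..<m-1}"
proof (rule inj_onI, rule ccontr)
  fix k l assume kl: "k \<in> {..<m-1}" "l \<in> {..<m-1}" "vec n (a k) = vec n (a l)" "k \<noteq> l"
  have "a k r = a l r" if "r < n" for r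
  proof -
    have "vec n (a k) $ r = vec n (a l) $ r" using kl(3) by simp
    then show ?thesis using that by simp
  qed
  then have "(\<Sum>r<n. a k r * a k r) = (\<Sum>r<n. a k r * a l r)" by (intro sum.cong) auto
  moreover have "k < m" "l < m" using kl(1,2) by auto
  ultimately have "(2::real) - 2 / real m = - 2 / real m" using gram[of k k] gram[of k l] kl(4) by simp
  then show False by simp
qed


context vec_space begin

lemma rank_ge_indpt_span:
  assumes A: "A \<in> carrier_mat n nc" and U: "U \<subseteq> span (set (cols A))" and li: "lin_indpt U"
  shows "card U \<le> rank A"
proof -
  let ?W = "span (set (cols A))"
  have cs: "set (cols A) \<subseteq> carrier_vec n" using A cols_dim by blast
  have sub: "subspace class_ring ?W V" using span_is_subspace[of "set (cols A)"] cs by simp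
  have vsW: "vectorspace class_ring (vs ?W)" using subspace_is_vs[OF sub] .
  have fd: "vectorspace.fin_dim class_ring (vs ?W)" using fin_dim_span_cols[OF A] .
  have sm: "submodule class_ring ?W V" using sub unfolding subspace_def by blast
  have li': "\<not> module.lin_dep class_ring (vs ?W) U" using span_li_not_depend(2)[OF U sm] li by simp
  show ?thesis unfolding rank_def using vectorspace.li_le_dim(2)[OF vsW fd _ li'] U by simp
qed

end


lemma gram_lin_indpt:
  fixes a :: "nat \<Rightarrow> nat \<Rightarrow> real"
  assumes gram: "\<And>k l. k<m \<Longrightarrow> l<m \<Longrightarrow> (\<Sum>r<N. a k r * a l r) = (if k=l then 2 else 0) - 2 / real m"
    and m: "m \<ge> 2"
  shows "\<not> module.lin_dep class_ring (module_vec TYPE(real) N) ((\<lambda>l. vec N (a l)) ` {..<m-1})"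
proof
  interpret V: vec_space "TYPE(real)" N .
  let ?U = "(\<lambda>l. vec N (a l)) ` {..<m-1}"
  assume "V.lin_dep ?U"
  then obtain A c v where A: "finite A" "A \<subseteq> ?U" "V.lincomb c A = 0\<^sub>v N" "v \<in> A" "c v \<noteq> 0"
    unfolding V.lin_dep_def by auto
  define L where "L = {l \<in> {..<m-1}. vec N (a l) \<in> A}"
  have AL: "A = (\<lambda>l. vec N (a l)) ` L" using A(2) unfolding L_def by auto
  have inj: "inj_on (\<lambda>l. vec N (a l)) L"
    using gram_vecs_indpt[OF gram m] unfolding L_def by (rule inj_on_subset) auto
  have Acar: "A \<subseteq> carrier_vec N" using A(2) by auto
  have z: "(\<Sum>l\<in>L. c (vec N (a l)) * a l r) = 0" if r: "r < N" for r
  proof -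
    have "0 = V.lincomb c A $ r" using A(3) r by simp
    also have "\<dots> = (\<Sum>x\<in>A. c x * x $ r)" by (rule V.lincomb_index[OF r Acar])
    also have "\<dots> = (\<Sum>l\<in>L. c (vec N (a l)) * vec N (a l) $ r)"
      unfolding AL by (rule sum.reindex[OF inj, unfolded comp_def])
    also have "\<dots> = (\<Sum>l\<in>L. c (vec N (a l)) * a l r)" using r by simp
    finally show ?thesis by simp
  qed
  have "\<forall>l\<in>L. c (vec N (a l)) = 0"
    by (rule gram_indep_coeffs[where c="\<lambda>l. c (vec N (a l))", OF gram _ z m]) (auto simp: L_def)
  moreover obtain j where "j \<in> L" "v = vec N (a j)" using A(4) AL by auto
  ultimately show False using A(5) by simp
qed


lemma proj_exists:
  fixes a :: "nat \<Rightarrow> nat \<Rightarrow> real"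
  assumes gram: "\<And>k l. k<m \<Longrightarrow> l<m \<Longrightarrow> (\<Sum>r<N. a k r * a l r) = (if k=l then 2 else 0) - 2 / real m"
    and sum0: "\<And>r. r<N \<Longrightarrow> (\<Sum>k<m. a k r) = 0" and m: "m \<ge> 2"
  shows "\<exists>P. orth_proj_rank N (m-1) P \<and> (\<forall>l<m. \<forall>r<N. (\<Sum>s<N. P $$ (r,s) * a l s) = a l r)
     \<and> (\<forall>r<N. \<forall>s<N. P $$ (r,s) = P $$ (s,r)) \<and> (\<forall>r<N. \<forall>t<N. (\<Sum>s<N. P $$ (r,s) * P $$ (s,t)) = P $$ (r,t))"
proof -
  define P where "P = mat N N (\<lambda>(r,s). (\<Sum>k<m. a k r * a k s) / 2)"
  have Pe: "P $$ (r,s) = (\<Sum>k<m. a k r * a k s) / 2" if "r<N" "s<N" for r s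
    using that unfolding P_def by simp
  have Pc: "P \<in> carrier_mat N N" unfolding P_def by simp
  have Pd: "dim_row P = N" "dim_col P = N" unfolding P_def by simp_all
  have sym: "P $$ (r,s) = P $$ (s,r)" if "r<N" "s<N" for r s
    using that by (simp add: Pe mult.commute)
  have fixp: "(\<Sum>s<N. P $$ (r,s) * a l s) = a l r" if "l<m" "r<N" for l r
  proof -
    have "(\<Sum>s<N. P $$ (r,s) * a l s) = (\<Sum>s<N. \<Sum>k<m. a k r * (a k s * a l s) / 2)"
      using that by (intro sum.cong refl) (simp add: Pe sum_distrib_right sum_distrib_left sum_divide_distrib ac_simps)
    also have "\<dots> = (\<Sum>k<m. a k r * (\<Sum>s<N. a k s * a l s) / 2)"
      by (subst sum.swap) (simp add: sum_distrib_left sum_divide_distrib)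
    also have "\<dots> = (\<Sum>k<m. (if k = l then a k r else 0) - a k r / real m)"
      using that by (intro sum.cong refl) (auto simp: gram field_simps)
    also have "\<dots> = a l r - (\<Sum>k<m. a k r) / real m"
      using that by (simp add: sum_subtractf sum_divide_distrib)
    finally show ?thesis using sum0[OF that(2)] by simp
  qed
  have idem: "(\<Sum>s<N. P $$ (r,s) * P $$ (s,t)) = P $$ (r,t)" if "r<N" "t<N" for r t
  proof -
    have "(\<Sum>s<N. P $$ (r,s) * P $$ (s,t)) = (\<Sum>s<N. \<Sum>l<m. P $$ (r,s) * a l s * a l t / 2)"
      using that by (intro sum.cong refl) (simp add: Pe sum_distrib_left sum_divide_distrib ac_simps)
    also have "\<dots> = (\<Sum>l<m. (\<Sum>s<N. P $$ (r,s) * a l s) * a l t / 2)"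
      by (subst sum.swap) (simp add: sum_distrib_right sum_divide_distrib)
    also have "\<dots> = (\<Sum>l<m. a l r * a l t / 2)"
      using that by (intro sum.cong refl) (simp add: fixp)
    also have "\<dots> = P $$ (r,t)" using that by (simp add: Pe sum_divide_distrib)
    finally show ?thesis .
  qed
  have PT: "P\<^sup>T = P" by (rule eq_matI) (auto simp: P_def mult.commute)
  have PP: "P * P = P"
  proof (rule eq_matI)
    fix i j assume "i < dim_row P" "j < dim_col P"
    then have ij: "i < N" "j < N" using Pc by auto
    have "(P*P) $$ (i,j) = (\<Sum>s<N. P$$(i,s) * P$$(s,j))" using ij Pc by (simp add: scalar_prod_def atLeast0LessThan)
    then show "(P*P) $$ (i,j) = P $$ (i,j)" using idem ij by simp
  qed (use Pc in auto)
  interpret V: vec_space "TYPE(real)" N .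
  have rk_le: "V.rank P \<le> m - 1"
  proof -
    have "P = mat N N (\<lambda>(r,s). \<Sum>k<m-1. (a k r / 2) * (a k s - a (m-1) s))"
    proof (rule eq_matI)
      fix r s assume rs: "r < dim_row (mat N N (\<lambda>(r,s). \<Sum>k<m-1. (a k r / 2) * (a k s - a (m-1) s)))"
        "s < dim_col (mat N N (\<lambda>(r,s). \<Sum>k<m-1. (a k r / 2) * (a k s - a (m-1) s)))"
      then have rs': "r < N" "s < N" by auto
      have mm: "m = Suc (m-1)" using m by simp
      have last: "a (m-1) r = - (\<Sum>k<m-1. a k r)"
        using sum0[OF rs'(1)] by (subst (asm) mm, subst (asm) sum.lessThan_Suc) simp
      have "(\<Sum>k<m. a k r * a k s) = (\<Sum>k<m-1. a k r * a k s) + a (m-1) r * a (m-1) s"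
        by (subst mm, subst sum.lessThan_Suc) simp
      also have "\<dots> = (\<Sum>k<m-1. a k r * (a k s - a (m-1) s))"
        unfolding last by (simp add: right_diff_distrib sum_subtractf sum_distrib_right)
      finally show "P $$ (r,s) = mat N N (\<lambda>(r,s). \<Sum>k<m-1. (a k r / 2) * (a k s - a (m-1) s)) $$ (r,s)"
        using rs' by (simp add: Pe sum_divide_distrib)
    qed (use Pc in auto)
    then show ?thesis
      using rank_sum_le[where N=N and N'=N and K="m-1" and f="\<lambda>k r. a k r / 2" and g="\<lambda>k s. a k s - a (m-1) s"] by simp
  qed
  have rk_ge: "m - 1 \<le> V.rank P"
  proof -
    let ?U = "(\<lambda>l. vec N (a l)) ` {..<m-1}"
    have inj: "inj_on (\<lambda>l. vec N (a l)) {..<m-1}" by (rule gram_vecs_indpt[OF gram m])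
    have card: "card ?U = m - 1" using card_image[OF inj] by simp
    have "?U \<subseteq> V.span (set (cols P))"
    proof
      fix u assume "u \<in> ?U"
      then obtain l where l: "l < m-1" "u = vec N (a l)" by auto
      have "P *\<^sub>v vec N (a l) = vec N (a l)"
      proof (rule eq_vecI)
        fix i assume "i < dim_vec (vec N (a l))"
        then have i: "i < N" by simp
        have "(P *\<^sub>v vec N (a l)) $ i = (\<Sum>s<N. P $$ (i,s) * a l s)"
          using i Pd by (simp add: scalar_prod_def atLeast0LessThan)
        also have "\<dots> = a l i" using fixp l i by simp
        finally show "(P *\<^sub>v vec N (a l)) $ i = vec N (a l) $ i" using i by simp
      qed (simp add: Pd)
      then have "u \<in> V.col_space P" unfolding V.col_space_eq[OF Pc] using l Pc by force
      then show "u \<in> V.span (set (cols P))" unfolding V.col_space_def .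
    qed
    from V.rank_ge_indpt_span[OF Pc this gram_lin_indpt[OF gram m]] card show ?thesis by simp
  qed
  have "orth_proj_rank N (m-1) P"
    unfolding orth_proj_rank_def using Pc PT PP rk_le rk_ge by simp
  then show ?thesis using fixp sym idem by blast
qed


definition Yf :: "nat \<Rightarrow> (nat \<Rightarrow> complex mat) \<Rightarrow> nat \<Rightarrow> complex mat" where
  "Yf n lamB j = (if j = 0 then 1\<^sub>m n else lamB (j-1))"

definition Gf :: "nat \<Rightarrow> (nat \<Rightarrow> complex mat) \<Rightarrow> (nat \<Rightarrow> complex mat) \<Rightarrow> nat \<Rightarrow> nat \<Rightarrow> complex mat" where
  "Gf n lamA lamB i j = kron (lamA i) (Yf n lamB j)"

definition cf :: "nat \<Rightarrow> nat \<Rightarrow> nat \<Rightarrow> real" where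
  "cf m n j = sqrt (2 / (real m ^ 2 * real n)) * (if j = 0 then real m / 2 else sqrt (2 / real n) * (real (m*n) / 4))"

lemma one_herm: "hermitian_mat n (1\<^sub>m n)"
  by (rule herm_intro) auto

lemma su_herm: "su_generators m lam \<Longrightarrow> s < m^2-1 \<Longrightarrow> hermitian_mat m (lam s)"
  unfolding su_generators_def by blast

lemma su_tr0: "su_generators m lam \<Longrightarrow> s < m^2-1 \<Longrightarrow> mtrace (lam s) = 0"
  unfolding su_generators_def by blast

lemma su_orth: "su_generators m lam \<Longrightarrow> s < m^2-1 \<Longrightarrow> t < m^2-1 \<Longrightarrow>
   tr2 m (lam s) (lam t) = (if s = t then 2 else 0)"
proof -
  assume a: "su_generators m lam" "s < m^2-1" "t < m^2-1"
  then have "mtrace (lam s * lam t) = (if s = t then 2 else 0)" unfolding su_generators_def by blast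
  moreover have "mtrace (lam s * lam t) = tr2 m (lam s) (lam t)"
    using a by (intro mtrace_mult herm_carrier su_herm)
  ultimately show ?thesis by simp
qed

lemma tr2_one_lam: "su_generators m lam \<Longrightarrow> s < m^2-1 \<Longrightarrow> tr2 m (1\<^sub>m m) (lam s) = 0"
proof -
  assume a: "su_generators m lam" "s < m^2-1"
  have "tr2 m (1\<^sub>m m) (lam s) = mtrace (lam s)"
    unfolding tr2_one_left mtrace_def using herm_carrier[OF su_herm[OF a]] by simp
  then show ?thesis using su_tr0[OF a] by simp
qed

lemma Yf_herm: "su_generators n lamB \<Longrightarrow> j < 1 + (n^2-1) \<Longrightarrow> hermitian_mat n (Yf n lamB j)"
  unfolding Yf_def using one_herm su_herm by auto

lemma Yf_orth: assumes su: "su_generators n lamB" and j: "j < 1 + (n^2-1)" "j' < 1 + (n^2-1)"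
  shows "tr2 n (Yf n lamB j) (Yf n lamB j') = (if j = j' then (if j = 0 then of_nat n else 2) else 0)"
proof (cases "j = 0"; cases "j' = 0")
  assume "j = 0" "j' = 0" then show ?thesis unfolding Yf_def by (simp add: tr2_one_one)
next
  assume "j = 0" "j' \<noteq> 0" then show ?thesis unfolding Yf_def using tr2_one_lam[OF su, of "j'-1"] j by simp
next
  assume "j \<noteq> 0" "j' = 0" then show ?thesis unfolding Yf_def using tr2_one_lam[OF su, of "j-1"] j tr2_comm by simp
next
  assume "j \<noteq> 0" "j' \<noteq> 0" then show ?thesis unfolding Yf_def using su_orth[OF su, of "j-1" "j'-1"] j by auto
qed

lemma Gf_herm: "su_generators m lamA \<Longrightarrow> su_generators n lamB \<Longrightarrow> i < m^2-1 \<Longrightarrow> j < 1 + (n^2-1) \<Longrightarrow>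
  hermitian_mat (m*n) (Gf n lamA lamB i j)"
  unfolding Gf_def by (intro kron_herm su_herm Yf_herm)

lemma Gf_orth: assumes su: "su_generators m lamA" "su_generators n lamB"
  and ij: "i < m^2-1" "j < 1 + (n^2-1)" "i' < m^2-1" "j' < 1 + (n^2-1)"
  shows "tr2 (m*n) (Gf n lamA lamB i j) (Gf n lamA lamB i' j') =
     (if (i,j) = (i',j') then (if j = 0 then 2 * of_nat n else 4) else 0)"
proof -
  have "tr2 (m*n) (Gf n lamA lamB i j) (Gf n lamA lamB i' j') = tr2 m (lamA i) (lamA i') * tr2 n (Yf n lamB j) (Yf n lamB j')"
    unfolding Gf_def using su ij by (intro tr2_kron herm_carrier su_herm Yf_herm)
  then show ?thesis using su_orth[OF su(1) ij(1,3)] Yf_orth[OF su(2) ij(2,4)] by auto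
qed

lemma lc_dims: "left_corr m n lamA lamB X \<in> carrier_mat (m^2-1) (1 + (n^2-1))"
  unfolding left_corr_def by simp

lemma lc_entry: assumes su: "su_generators m lamA" "su_generators n lamB"
  and X: "X \<in> carrier_mat (m*n) (m*n)" and ij: "i < m^2-1" "j < 1 + (n^2-1)"
  shows "left_corr m n lamA lamB X $$ (i,j) = cf m n j * Re (tr2 (m*n) (Gf n lamA lamB i j) X)"
proof -
  have "mtrace (Gf n lamA lamB i j * X) = tr2 (m*n) (Gf n lamA lamB i j) X"
    by (rule mtrace_mult[OF herm_carrier[OF Gf_herm[OF su ij]] X])
  then show ?thesis using ij unfolding left_corr_def bloch_x_def corr_t_def cf_def Gf_def Yf_def
    by (cases "j = 0") auto
qed

lemma cf_sq: assumes "m \<ge> 1" "n \<ge> 1"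
  shows "(cf m n j)^2 = 1 / (if j = 0 then 2 * real n else 4)"
  using assms unfolding cf_def
  by (cases "j = 0") (auto simp: power_mult_distrib real_sqrt_mult field_simps power2_eq_square)


lemma bessel_app:
  assumes m: "m \<ge> 1" and n: "n \<ge> 1" and su: "su_generators m lamA" "su_generators n lamB"
    and Dh: "hermitian_mat (m*n) \<Delta>"
  shows "(\<Sum>i<m^2-1. \<Sum>j<1+(n^2-1). (cf m n j * Re (tr2 (m*n) (Gf n lamA lamB i j) \<Delta>))^2)
     \<le> Re (tr2 (m*n) \<Delta> \<Delta>)"
proof -
  define D where "D = m*n"
  define E where "E = {..<D} \<times> {..<D}"
  define I where "I = {..<m^2-1} \<times> {..<1+(n^2-1)}"
  define g where "g = (\<lambda>(i,j) (p,q). Gf n lamA lamB i j $$ (p,q))"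
  define c where "c = (\<lambda>(i::nat,j::nat). if j = 0 then 2 * real n else 4)"
  define f where "f = (\<lambda>(p,q). \<Delta> $$ (p,q))"
  have sumE: "(\<Sum>x\<in>E. h x) = (\<Sum>p<D. \<Sum>q<D. h (p,q))" for h :: "nat \<times> nat \<Rightarrow> complex"
    unfolding E_def by (simp add: sum.cartesian_product)
  have sumEr: "(\<Sum>x\<in>E. h x) = (\<Sum>p<D. \<Sum>q<D. h (p,q))" for h :: "nat \<times> nat \<Rightarrow> real"
    unfolding E_def by (simp add: sum.cartesian_product)
  have Gh: "hermitian_mat D (Gf n lamA lamB i j)" if "(i,j) \<in> I" for i j
    using Gf_herm[OF su] that unfolding I_def D_def by auto
  have F: "(\<Sum>x\<in>E. f x * cnj (g (i,j) x)) = tr2 D (Gf n lamA lamB i j) \<Delta>" if "(i,j) \<in> I" for i j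
  proof -
    have "(\<Sum>x\<in>E. f x * cnj (g (i,j) x)) = (\<Sum>p<D. \<Sum>q<D. \<Delta> $$ (p,q) * Gf n lamA lamB i j $$ (q,p))"
      unfolding sumE f_def g_def using herm_cnj[OF Gh[OF that]] by (intro sum.cong refl) simp
    also have "\<dots> = tr2 D \<Delta> (Gf n lamA lamB i j)" unfolding tr2_def ..
    finally show ?thesis using tr2_comm by metis
  qed
  have orth: "(\<Sum>x\<in>E. g \<alpha> x * cnj (g \<beta> x)) = (if \<alpha> = \<beta> then complex_of_real (c \<alpha>) else 0)"
    if "\<alpha> \<in> I" "\<beta> \<in> I" for \<alpha> \<beta>
  proof -
    obtain i j i' j' where ab: "\<alpha> = (i,j)" "\<beta> = (i',j')" by fastforce
    have "(\<Sum>x\<in>E. g \<alpha> x * cnj (g \<beta> x)) = (\<Sum>p<D. \<Sum>q<D. Gf n lamA lamB i j $$ (p,q) * Gf n lamA lamB i' j' $$ (q,p))"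
      unfolding sumE g_def ab using herm_cnj[OF Gh[OF that(2)[unfolded ab]]] by (intro sum.cong refl) simp
    also have "\<dots> = tr2 D (Gf n lamA lamB i j) (Gf n lamA lamB i' j')" unfolding tr2_def ..
    also have "\<dots> = (if (i,j) = (i',j') then (if j = 0 then 2 * of_nat n else 4) else 0)"
      unfolding D_def using that ab by (intro Gf_orth[OF su]) (auto simp: I_def)
    finally show ?thesis unfolding ab c_def by simp
  qed
  have B: "(\<Sum>\<alpha>\<in>I. (cmod (\<Sum>x\<in>E. f x * cnj (g \<alpha> x)))^2 / c \<alpha>) \<le> (\<Sum>x\<in>E. (cmod (f x))^2)"
    by (rule bessel[OF _ _ _ orth]) (use n in \<open>auto simp: E_def I_def c_def\<close>)
  have L: "(\<Sum>i<m^2-1. \<Sum>j<1+(n^2-1). (cf m n j * Re (tr2 D (Gf n lamA lamB i j) \<Delta>))^2)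
     \<le> (\<Sum>\<alpha>\<in>I. (cmod (\<Sum>x\<in>E. f x * cnj (g \<alpha> x)))^2 / c \<alpha>)"
  proof -
    have Heq: "(\<Sum>\<alpha>\<in>I. (cmod (\<Sum>x\<in>E. f x * cnj (g \<alpha> x)))^2 / c \<alpha>) =
       (\<Sum>i<m^2-1. \<Sum>j<1+(n^2-1). (cmod (tr2 D (Gf n lamA lamB i j) \<Delta>))^2 / c (i,j))"
    proof -
      have "(\<Sum>\<alpha>\<in>I. (cmod (\<Sum>x\<in>E. f x * cnj (g \<alpha> x)))^2 / c \<alpha>) =
         (\<Sum>i<m^2-1. \<Sum>j<1+(n^2-1). (cmod (\<Sum>x\<in>E. f x * cnj (g (i,j) x)))^2 / c (i,j))"
        unfolding I_def sum.cartesian_product by (simp add: case_prod_unfold)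
      also have "\<dots> = (\<Sum>i<m^2-1. \<Sum>j<1+(n^2-1). (cmod (tr2 D (Gf n lamA lamB i j) \<Delta>))^2 / c (i,j))"
        by (intro sum.cong refl) (simp add: F I_def)
      finally show ?thesis .
    qed
    have Hle: "(cf m n j * Re z)^2 \<le> (cmod z)^2 / c (i,j)" for i j z
    proof -
      have "(cf m n j * Re z)^2 = (Re z)^2 / c (i,j)"
        using cf_sq[OF m n, of j] by (simp add: power_mult_distrib c_def)
      also have "\<dots> \<le> (cmod z)^2 / c (i,j)"
        by (intro divide_right_mono) (auto simp: c_def abs_Re_le_cmod power_mono simp flip: abs_le_square_iff)
      finally show ?thesis .
    qed
    show ?thesis unfolding Heq by (intro sum_mono Hle)
  qed
  have R: "(\<Sum>x\<in>E. (cmod (f x))^2) = Re (tr2 D \<Delta> \<Delta>)"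
  proof -
    have "tr2 D \<Delta> \<Delta> = (\<Sum>p<D. \<Sum>q<D. complex_of_real ((cmod (\<Delta> $$ (p,q)))^2))"
      unfolding tr2_def D_def using herm_cnj[OF Dh]
      by (intro sum.cong refl) (metis cmod_sq_cnj lessThan_iff)
    then show ?thesis unfolding sumEr f_def by simp
  qed
  show ?thesis using L B R unfolding D_def by linarith
qed


lemma tr2_minus: "A \<in> carrier_mat d d \<Longrightarrow> B \<in> carrier_mat d d \<Longrightarrow> tr2 d G (A - B) = tr2 d G A - tr2 d G B"
  unfolding tr2_def by (simp add: right_diff_distrib sum_subtractf)

lemma herm_minus: "hermitian_mat d A \<Longrightarrow> hermitian_mat d B \<Longrightarrow> hermitian_mat d (A - B)"
proof -
  assume A: "hermitian_mat d A" and B: "hermitian_mat d B"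
  have Ac: "A \<in> carrier_mat d d" and Bc: "B \<in> carrier_mat d d" using A B herm_carrier by auto
  show ?thesis
  proof (rule herm_intro)
    show "A - B \<in> carrier_mat d d" using Bc by (rule minus_carrier_mat)
    fix i j assume ij: "i < d" "j < d"
    show "cnj ((A - B) $$ (i,j)) = (A - B) $$ (j,i)"
      using ij Ac Bc herm_cnj[OF A ij] herm_cnj[OF B ij] by simp
  qed
qed

lemma state_herm: "is_state d \<rho> \<Longrightarrow> hermitian_mat d \<rho>"
  unfolding is_state_def by blast

definition chi :: "nat \<Rightarrow> nat \<Rightarrow> (nat \<Rightarrow> complex vec) \<Rightarrow> (nat \<Rightarrow> real) \<Rightarrow> (nat \<Rightarrow> complex mat) \<Rightarrow> complex mat" where
  "chi m n e p \<rho>k = mat (m*n) (m*n) (\<lambda>(i,j). \<Sum>k<m. complex_of_real (p k) *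
                                   kron (outer (e k) (e k)) (\<rho>k k) $$ (i,j))"

context
  fixes m n :: nat and e :: "nat \<Rightarrow> complex vec" and p :: "nat \<Rightarrow> real" and \<rho>k :: "nat \<Rightarrow> complex mat"
  assumes onb: "orthonormal_basis m e" and st: "\<And>k. k < m \<Longrightarrow> is_state n (\<rho>k k)"
begin


lemma Kk_herm: "k < m \<Longrightarrow> hermitian_mat (m*n) (kron (outer (e k) (e k)) (\<rho>k k))"
  by (intro kron_herm outer_herm onb_carrier[OF onb] state_herm st)

lemma chi_carrier: "chi m n e p \<rho>k \<in> carrier_mat (m*n) (m*n)" unfolding chi_def by simp

lemma chi_herm: "hermitian_mat (m*n) (chi m n e p \<rho>k)"
proof (rule herm_intro[OF chi_carrier])
  fix i j assume ij: "i < m*n" "j < m*n"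
  have "cnj (chi m n e p \<rho>k $$ (i,j)) = (\<Sum>k<m. complex_of_real (p k) * cnj (kron (outer (e k) (e k)) (\<rho>k k) $$ (i,j)))"
    using ij unfolding chi_def by (simp add: cnj_sum)
  also have "\<dots> = (\<Sum>k<m. complex_of_real (p k) * kron (outer (e k) (e k)) (\<rho>k k) $$ (j,i))"
    using herm_cnj[OF Kk_herm ij] by (intro sum.cong refl) simp
  also have "\<dots> = chi m n e p \<rho>k $$ (j,i)" using ij unfolding chi_def by simp
  finally show "cnj (chi m n e p \<rho>k $$ (i,j)) = chi m n e p \<rho>k $$ (j,i)" .
qed

lemma chi_tr2:
  assumes G: "G \<in> carrier_mat m m" and H: "H \<in> carrier_mat n n"
  shows "tr2 (m*n) (kron G H) (chi m n e p \<rho>k) = (\<Sum>k<m. complex_of_real (p k) * (tr2 m G (outer (e k) (e k)) * tr2 n H (\<rho>k k)))"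
proof -
  have "tr2 (m*n) (kron G H) (chi m n e p \<rho>k) = (\<Sum>i<m*n. \<Sum>j<m*n. \<Sum>k<m. complex_of_real (p k) * (kron G H $$ (i,j) * kron (outer (e k) (e k)) (\<rho>k k) $$ (j,i)))"
    unfolding tr2_def chi_def by (intro sum.cong refl) (simp add: sum_distrib_left ac_simps)
  also have "\<dots> = (\<Sum>k<m. complex_of_real (p k) * tr2 (m*n) (kron G H) (kron (outer (e k) (e k)) (\<rho>k k)))"
    unfolding tr2_def sum_distrib_left
    by (subst sum.swap, subst (2) sum.swap, rule refl)
  also have "\<dots> = (\<Sum>k<m. complex_of_real (p k) * (tr2 m G (outer (e k) (e k)) * tr2 n H (\<rho>k k)))"
    by (intro sum.cong refl, subst tr2_kron[OF G outer_carrier[OF onb_carrier[OF onb]] H herm_carrier[OF state_herm[OF st]]])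
       auto
  finally show ?thesis .
qed

end


lemma main_ineq:
  assumes m: "m \<ge> 2" and n: "n \<ge> 2" and suA: "su_generators m lamA" and suB: "su_generators n lamB"
    and st: "is_state (m*n) \<rho>" and zd: "zero_discord m n \<chi>"
  shows "\<exists>P. orth_proj_rank (m^2-1) (m-1) P \<and>
    frob_sq (left_corr m n lamA lamB \<rho> - P * left_corr m n lamA lamB \<rho>) \<le> Re (mtrace ((\<rho> - \<chi>) * (\<rho> - \<chi>)))"
proof -
  obtain e p \<rho>k where onb: "orthonormal_basis m e" and stk: "\<forall>k<m. is_state n (\<rho>k k)"
    and chi: "\<chi> = mat (m*n) (m*n) (\<lambda>(i,j). \<Sum>k<m. complex_of_real (p k) * kron (outer (e k) (e k)) (\<rho>k k) $$ (i,j))"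
    using zd unfolding zero_discord_def by blast
  have stk': "\<And>k. k<m \<Longrightarrow> is_state n (\<rho>k k)" using stk by blast
  have chi': "\<chi> = chi m n e p \<rho>k" using chi unfolding chi_def .
  define D where "D = m*n"
  define N where "N = m^2-1"
  define K where "K = 1+(n^2-1)"
  define T where "T = left_corr m n lamA lamB \<rho>"
  define Tc where "Tc = left_corr m n lamA lamB \<chi>"
  have \<rho>h: "hermitian_mat D \<rho>" using state_herm[OF st] unfolding D_def .
  have \<chi>h: "hermitian_mat D \<chi>" unfolding chi' D_def by (rule chi_herm[OF onb stk'])
  have \<rho>c: "\<rho> \<in> carrier_mat D D" using herm_carrier[OF \<rho>h] .
  have \<chi>c: "\<chi> \<in> carrier_mat D D" using herm_carrier[OF \<chi>h] .
  have m1: "m \<ge> 1" and n1: "n \<ge> 1" using m n by auto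
  define x where "x k s = tr2 m (lamA s) (outer (e k) (e k))" for k s
  define a where "a k s = Re (x k s)" for k s
  have Im0: "Im (x k s) = 0" if "k < m" "s < N" for k s
    unfolding x_def using that unfolding N_def
    by (intro tr2_real su_herm[OF suA] outer_herm onb_carrier[OF onb])
  have gram: "(\<Sum>s<N. a k s * a l s) = (if k=l then 2 else 0) - 2 / real m" if kl: "k<m" "l<m" for k l
  proof -
    have "(\<Sum>s<N. a k s * a l s) = Re (\<Sum>s<N. x k s * x l s)"
      unfolding a_def Re_sum using Im0 kl by (intro sum.cong refl) simp
    also have "(\<Sum>s<N. x k s * x l s) = (if k = l then 2 else 0) - 2 / of_nat m"
      unfolding x_def N_def by (rule bloch_gram[OF suA m1 onb kl])
    finally show ?thesis by simp
  qed
  have sum0: "(\<Sum>k<m. a k s) = 0" if "s < N" for s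
  proof -
    have "(\<Sum>k<m. a k s) = Re (\<Sum>k<m. x k s)" unfolding a_def Re_sum ..
    also have "(\<Sum>k<m. x k s) = 0" unfolding x_def using that unfolding N_def by (rule bloch_sum0[OF suA onb])
    finally show ?thesis by simp
  qed
  obtain P where Pproj: "orth_proj_rank N (m-1) P"
    and Pfix: "\<forall>l<m. \<forall>r<N. (\<Sum>s<N. P $$ (r,s) * a l s) = a l r"
    and Psym: "\<forall>r<N. \<forall>s<N. P $$ (r,s) = P $$ (s,r)"
    and Pidem: "\<forall>r<N. \<forall>t<N. (\<Sum>s<N. P $$ (r,s) * P $$ (s,t)) = P $$ (r,t)"
    using proj_exists[OF gram sum0 m] by blast
  have Pc: "P \<in> carrier_mat N N" using Pproj unfolding orth_proj_rank_def by blast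
  have Tc_dims: "T \<in> carrier_mat N K" "Tc \<in> carrier_mat N K" unfolding T_def Tc_def N_def K_def by (rule lc_dims)+
  define w where "w k j = cf m n j * p k * Re (tr2 n (Yf n lamB j) (\<rho>k k))" for k j
  have Tc_struct: "Tc $$ (s,j) = (\<Sum>k<m. a k s * w k j)" if sj: "s < N" "j < K" for s j
  proof -
    have "Tc $$ (s,j) = cf m n j * Re (tr2 D (Gf n lamA lamB s j) \<chi>)"
      unfolding Tc_def D_def using sj unfolding N_def K_def by (intro lc_entry[OF suA suB \<chi>c[unfolded D_def]])
    also have "tr2 D (Gf n lamA lamB s j) \<chi> = (\<Sum>k<m. complex_of_real (p k) * (x k s * tr2 n (Yf n lamB j) (\<rho>k k)))"
      unfolding Gf_def D_def chi' x_def
      using sj unfolding N_def K_def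
      by (intro chi_tr2[OF onb stk'] herm_carrier su_herm[OF suA] Yf_herm[OF suB])
    also have "cf m n j * Re (\<Sum>k<m. complex_of_real (p k) * (x k s * tr2 n (Yf n lamB j) (\<rho>k k))) = (\<Sum>k<m. a k s * w k j)"
      unfolding Re_sum sum_distrib_left a_def w_def using Im0 sj by (intro sum.cong refl) simp
    finally show ?thesis .
  qed
  have PTc: "(\<Sum>s<N. P $$ (r,s) * Tc $$ (s,j)) = Tc $$ (r,j)" if rj: "r < N" "j < K" for r j
  proof -
    have "(\<Sum>s<N. P $$ (r,s) * Tc $$ (s,j)) = (\<Sum>s<N. \<Sum>k<m. w k j * (P $$ (r,s) * a k s))"
      using rj by (intro sum.cong refl) (simp add: Tc_struct sum_distrib_left ac_simps)
    also have "\<dots> = (\<Sum>k<m. w k j * (\<Sum>s<N. P $$ (r,s) * a k s))"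
      by (subst sum.swap) (simp add: sum_distrib_left)
    also have "\<dots> = (\<Sum>k<m. a k r * w k j)" using Pfix rj by (intro sum.cong refl) simp
    also have "\<dots> = Tc $$ (r,j)" using Tc_struct rj by simp
    finally show ?thesis .
  qed
  define v where "v c s = T $$ (s,c) - Tc $$ (s,c)" for c s
  have entry: "(T - P*T) $$ (r,c) = v c r - (\<Sum>s<N. P $$ (r,s) * v c s)" if rc: "r < N" "c < K" for r c
  proof -
    have "(T - P*T) $$ (r,c) = T $$ (r,c) - (\<Sum>s<N. P $$ (r,s) * T $$ (s,c))"
      using rc Pc Tc_dims by (simp add: scalar_prod_def atLeast0LessThan)
    also have "(\<Sum>s<N. P $$ (r,s) * T $$ (s,c)) = (\<Sum>s<N. P $$ (r,s) * v c s) + Tc $$ (r,c)"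
      unfolding v_def PTc[OF rc, symmetric] by (simp add: right_diff_distrib sum_subtractf)
    finally show ?thesis unfolding v_def by simp
  qed
  have vform: "v c s = cf m n c * Re (tr2 D (Gf n lamA lamB s c) (\<rho> - \<chi>))" if sc: "s < N" "c < K" for s c
  proof -
    have "v c s = cf m n c * Re (tr2 D (Gf n lamA lamB s c) \<rho>) - cf m n c * Re (tr2 D (Gf n lamA lamB s c) \<chi>)"
      unfolding v_def T_def Tc_def D_def using sc unfolding N_def K_def
      by (simp add: lc_entry[OF suA suB \<rho>c[unfolded D_def]] lc_entry[OF suA suB \<chi>c[unfolded D_def]])
    then show ?thesis by (simp add: tr2_minus[OF \<rho>c \<chi>c] right_diff_distrib)
  qed
  have "frob_sq (T - P*T) = (\<Sum>r<N. \<Sum>c<K. ((T - P*T) $$ (r,c))^2)"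
    unfolding frob_sq_def using Pc Tc_dims by simp
  also have "\<dots> = (\<Sum>c<K. \<Sum>r<N. (v c r - (\<Sum>s<N. P $$ (r,s) * v c s))^2)"
    by (subst sum.swap) (intro sum.cong refl, simp add: entry)
  also have "\<dots> \<le> (\<Sum>c<K. \<Sum>r<N. (v c r)^2)"
    by (intro sum_mono proj_contract) (use Psym Pidem in auto)
  also have "\<dots> = (\<Sum>r<N. \<Sum>c<K. (cf m n c * Re (tr2 D (Gf n lamA lamB r c) (\<rho> - \<chi>)))^2)"
    by (subst sum.swap) (intro sum.cong refl, simp add: vform)
  also have "\<dots> \<le> Re (tr2 D (\<rho> - \<chi>) (\<rho> - \<chi>))"
    unfolding N_def K_def D_def
    by (rule bessel_app[OF m1 n1 suA suB herm_minus[OF \<rho>h[unfolded D_def] \<chi>h[unfolded D_def]]])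
  also have "\<dots> = Re (mtrace ((\<rho> - \<chi>) * (\<rho> - \<chi>)))"
  proof -
    have "\<rho> - \<chi> \<in> carrier_mat D D" using \<chi>c by (rule minus_carrier_mat)
    then show ?thesis using mtrace_mult[of "\<rho> - \<chi>" D "\<rho> - \<chi>"] by simp
  qed
  finally show ?thesis using Pproj unfolding T_def N_def by blast
qed


lemma unit_onb: "orthonormal_basis m (\<lambda>k. unit_vec m k)"
  unfolding orthonormal_basis_def
proof (intro conjI allI impI)
  fix k l assume kl: "k < m" "l < m"
  have "(\<Sum>i<m. cnj (unit_vec m k $ i) * unit_vec m l $ i) = (\<Sum>i<m. if i = k then (if k = l then 1 else 0) else 0)"
    by (intro sum.cong refl) (auto simp: unit_vec_def)
  then show "(\<Sum>i<m. cnj (unit_vec m k $ i) * unit_vec m l $ i) = (if k = l then 1 else 0)" using kl by simp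
qed auto

lemma pure_state: assumes n: "n \<ge> 1" shows "is_state n (outer (unit_vec n 0) (unit_vec n 0))"
proof -
  let ?u = "unit_vec n 0 :: complex vec" let ?A = "outer ?u ?u"
  have uc: "?u \<in> carrier_vec n" by simp
  have Ae: "?A $$ (i,j) = (if i = 0 \<and> j = 0 then 1 else 0)" if "i < n" "j < n" for i j
    using that by (simp add: outer_def unit_vec_def)
  have Ac: "?A \<in> carrier_mat n n" by (rule outer_carrier[OF uc])
  have psd: "psd_mat n ?A"
    unfolding psd_mat_def Let_def
  proof (intro conjI ballI Ac)
    fix v :: "complex vec" assume v: "v \<in> carrier_vec n"
    have Av: "(?A *\<^sub>v v) $ i = (if i = 0 then v $ 0 else 0)" if i: "i < n" for i
    proof -
      have "(?A *\<^sub>v v) $ i = (\<Sum>j<n. ?A $$ (i,j) * v $ j)"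
        using i v Ac by (simp add: scalar_prod_def atLeast0LessThan)
      also have "\<dots> = (\<Sum>j<n. if j = 0 then (if i = 0 then v $ 0 else 0) else 0)"
        using i by (intro sum.cong refl) (auto simp: Ae)
      finally show ?thesis using n by simp
    qed
    have "(\<Sum>i<n. cnj (v $ i) * (?A *\<^sub>v v) $ i) = (\<Sum>i<n. if i = 0 then cnj (v $ 0) * v $ 0 else 0)"
      by (intro sum.cong refl) (auto simp: Av)
    also have "\<dots> = cnj (v $ 0) * v $ 0" using n by simp
    also have "\<dots> = complex_of_real ((cmod (v $ 0))^2)" by (simp add: cmod_sq_cnj mult.commute)
    finally have q: "(\<Sum>i<n. cnj (v $ i) * (?A *\<^sub>v v) $ i) = complex_of_real ((cmod (v $ 0))^2)" .
    show "Im (\<Sum>i<n. cnj (v $ i) * (?A *\<^sub>v v) $ i) = 0" unfolding q by simp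
    show "0 \<le> Re (\<Sum>i<n. cnj (v $ i) * (?A *\<^sub>v v) $ i)" unfolding q by simp
  qed
  have tr: "mtrace ?A = 1"
  proof -
    have "mtrace ?A = (\<Sum>i<n. ?A $$ (i,i))" unfolding mtrace_def using Ac by simp
    also have "\<dots> = (\<Sum>i<n. if i = 0 then 1 else 0)" by (intro sum.cong refl) (auto simp: Ae)
    finally show ?thesis using n by simp
  qed
  show ?thesis unfolding is_state_def using outer_herm[OF uc] psd tr by blast
qed

lemma zd_exists: assumes "m \<ge> 1" "n \<ge> 1" shows "\<exists>\<chi>. zero_discord m n \<chi>"
proof -
  let ?p = "\<lambda>k::nat. if k = 0 then 1 else (0::real)"
  have "(\<Sum>k<m. ?p k) = 1" using assms by simp
  then have "zero_discord m n (chi m n (\<lambda>k. unit_vec m k) ?p (\<lambda>k. outer (unit_vec n 0) (unit_vec n 0)))"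
    unfolding zero_discord_def chi_def using unit_onb pure_state[OF assms(2)]
    by (intro exI[of _ "\<lambda>k. unit_vec m k"] exI[of _ ?p] exI[of _ "\<lambda>k. outer (unit_vec n 0) (unit_vec n 0)"]) auto
  then show ?thesis by blast
qed

theorem mainTheorem2:
  fixes m n :: nat and lamA lamB :: "nat \<Rightarrow> complex mat" and \<rho> :: "complex mat"
  assumes "m \<ge> 2" and "n \<ge> 2"
    and "su_generators m lamA" and "su_generators n lamB"
    and "is_state (m*n) \<rho>"
  shows "D_P m n lamA lamB \<rho> \<le> D_G m n \<rho>"
  unfolding D_P_def D_G_def
proof (rule cInf_mono)
  obtain \<chi> where "zero_discord m n \<chi>" using zd_exists assms(1,2) by fastforce
  then show "{Re (mtrace ((\<rho> - \<chi>) * (\<rho> - \<chi>))) | \<chi>. zero_discord m n \<chi>} \<noteq> {}" by blast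
next
  show "bdd_below {frob_sq (left_corr m n lamA lamB \<rho> - P * left_corr m n lamA lamB \<rho>) | P. orth_proj_rank (m\<^sup>2 - 1) (m - 1) P}"
    by (rule bdd_belowI[of _ 0]) (auto simp: frob_sq_def intro!: sum_nonneg)
next
  fix b assume "b \<in> {Re (mtrace ((\<rho> - \<chi>) * (\<rho> - \<chi>))) | \<chi>. zero_discord m n \<chi>}"
  then obtain \<chi> where b: "b = Re (mtrace ((\<rho> - \<chi>) * (\<rho> - \<chi>)))" and zd: "zero_discord m n \<chi>" by blast
  from main_ineq[OF assms zd] b
  show "\<exists>a\<in>{frob_sq (left_corr m n lamA lamB \<rho> - P * left_corr m n lamA lamB \<rho>) | P. orth_proj_rank (m\<^sup>2 - 1) (m - 1) P}. a \<le> b"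
    by blast
qed


end
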